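(* Let $\lambda\ge 1$ and let $A$ be an $m\times n$ rational matrix of full column rank. Consider the following procedure. Set $A^{(0)}=A$ and $\mathcal{B}=\emptyset$. For $k=1,\dots,n$: obtain a vector $b\in\operatorname{col}(A)\setminus\operatorname{span}(\mathcal{B})$ with $\|b\|_0\le\lambda\cdot\min\{\|a\|_0: a\in\operatorname{col}(A)\setminus\operatorname{span}(\mathcal{B})\}$, together with a column $a_j$ of $A^{(k-1)}$ that is not in $\mathcal{B}$ and such that replacing $a_j$ by $b$ preserves the column span; let $A^{(k)}$ be $A^{(k-1)}$ with $a_j$ replaced by $b$, and add $b$ to $\mathcal{B}$. Let $N$ be the matrix whose columns are the $n$ vectors in $\mathcal{B}$. Then $N=AX$ for some invertible $X$, and $\operatorname{nnz}(N)\le\lambda\cdot\min\{\operatorname{nnz}(AY): Y \text{ invertible}\}$; i.e. a $\lambda$-approximation oracle for sparsest independent vector yields a $\lambda$-approximation for matrix sparsification.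
   Context: $\|v\|_0$ is the number of nonzero entries of $v$, $\operatorname{nnz}(M)$ the number of nonzero entries of $M$, $\operatorname{col}(A)$ the column span, and $\operatorname{span}(\mathcal{B})$ the span of a set of vectors (the zero space if empty). Sparsest independent vector (SIV): given a full-column-rank matrix $A$ and a set $\mathcal{B}$ of columns of $A$, find $a\in\operatorname{col}(A)\setminus\operatorname{span}(\mathcal{B})$ minimizing $\|a\|_0$. *)

theory Defs
  imports "HOL-Analysis.Analysis"
begin

definition vnnz :: "'a::zero^'m \<Rightarrow> nat" where
  "vnnz v = card {i. v $ i \<noteq> 0}"

definition mnnz :: "'a::zero^'n^'m \<Rightarrow> nat" where
  "mnnz M = card {(i, j). M $ i $ j \<noteq> 0}"

definition colspace :: "'a::field^'n^'m \<Rightarrow> ('a^'m) set" where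
  "colspace A = vec.span (columns A)"

definition SIV_opt :: "'a::field^'n^'m \<Rightarrow> ('a^'m) set \<Rightarrow> nat" where
  "SIV_opt A B = Min {vnnz a | a. a \<in> colspace A - vec.span B}"

definition replace_col :: "'a^'n^'m \<Rightarrow> 'n \<Rightarrow> 'a^'m \<Rightarrow> 'a^'n^'m" where
  "replace_col M j b = (\<chi> i l. if l = j then b $ i else M $ i $ l)"

end

theory Submission
  imports Defs
begin

lemma col_axis: fixes M :: "'a::field^'n^'m"
  shows "M *v axis j 1 = column j M"
  by (simp add: vec_eq_iff matrix_vector_mult_def column_def axis_def if_distrib cong: if_cong)

lemma colspace_range: fixes A :: "'a::field^'n^'m"
  shows "colspace A = range ((*v) A)"
proof
  show "colspace A \<subseteq> range ((*v) A)"
    unfolding colspace_def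
  proof (rule vec.span_minimal)
    show "columns A \<subseteq> range ((*v) A)"
      unfolding columns_def by (auto simp flip: col_axis)
    show "vec.subspace (range ((*v) A))"
      using vec.linear_subspace_image[OF matrix_vector_mul_linear_gen vec.subspace_UNIV] by simp
  qed
  show "range ((*v) A) \<subseteq> colspace A"
    unfolding colspace_def using matrix_vector_mult_in_columnspace_gen by blast
qed

lemma mnnz_cols: fixes M :: "'a::zero^'n::finite^'m::finite"
  shows "mnnz M = (\<Sum>j\<in>UNIV. vnnz (column j M))"
proof -
  have "{(i, j). M $ i $ j \<noteq> 0} = prod.swap ` (SIGMA j:UNIV. {i. M $ i $ j \<noteq> 0})"
    by auto
  hence "mnnz M = card (SIGMA j:UNIV. {i. M $ i $ j \<noteq> 0})"
    unfolding mnnz_def by (simp add: card_image)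
  also have "\<dots> = (\<Sum>j\<in>UNIV. card {i. M $ i $ j \<noteq> 0})"
    by (simp add: card_SigmaI)
  finally show ?thesis by (simp add: vnnz_def column_def)
qed

lemma rank_full_inj: fixes A :: "'a::field^'n^'m"
  assumes "rank A = CARD('n)" shows "inj ((*v) A)"
proof -
  have "vec.span (rows A) = UNIV" using assms
    by (metis row_rank_def_gen vec_dim_card vec.dim_eq_full vec.dim_subset_UNIV vec.span_UNIV)
  thus ?thesis using matrix_left_invertible_span_rows_gen matrix_left_invertible_injective by blast
qed

lemma inj_cols_indep: fixes M :: "'a::field^'n^'m"
  shows "inj ((*v) M) \<longleftrightarrow> inj (\<lambda>j. column j M) \<and> vec.independent (columns M)"
proof -
  let ?c = "\<lambda>j. column j M"
  have colr: "columns M = range ?c" unfolding columns_def by auto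
  have fin: "finite (columns M)" unfolding colr by simp
  have key: "(\<forall>c. (\<Sum>i\<in>UNIV. c i *s ?c i) = 0 \<longrightarrow> (\<forall>i. c i = 0)) \<longleftrightarrow> inj ((*v) M)"
    using matrix_left_invertible_independent_columns[of M] matrix_left_invertible_injective[of M]
    by simp
  show ?thesis
  proof
    assume inj: "inj ((*v) M)"
    have ic: "inj ?c"
    proof (rule injI)
      fix i j assume "?c i = ?c j"
      hence "M *v axis i 1 = M *v axis j 1" by (simp add: col_axis)
      hence "axis i (1::'a) = axis j 1" using inj by (meson injD)
      thus "i = j" by (simp add: axis_eq_axis)
    qed
    have "vec.independent (columns M)"
    proof
      assume "vec.dependent (columns M)"
      then obtain u where u: "\<exists>v\<in>columns M. u v \<noteq> 0" "(\<Sum>v\<in>columns M. u v *s v) = 0"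
        using vec.dependent_finite[OF fin] by blast
      have "(\<Sum>i\<in>UNIV. u (?c i) *s ?c i) = 0"
        using u(2) unfolding colr by (simp add: sum.reindex[OF ic])
      moreover have kk: "\<forall>c. (\<Sum>i\<in>UNIV. c i *s ?c i) = 0 \<longrightarrow> (\<forall>i. c i = 0)"
        using key inj by blast
      ultimately have "\<forall>i. u (?c i) = 0" using kk[rule_format, of "\<lambda>i. u (?c i)"] by simp
      thus False using u(1) unfolding colr by auto
      thm u key
    qed
    with ic show "inj ?c \<and> vec.independent (columns M)" by blast
  next
    assume h: "inj ?c \<and> vec.independent (columns M)"
    have "\<forall>i. c i = 0" if hc: "(\<Sum>i\<in>UNIV. c i *s ?c i) = 0" for c
    proof -
      define u where "u v = c (inv ?c v)" for v
      have "(\<Sum>v\<in>columns M. u v *s v) = (\<Sum>i\<in>UNIV. u (?c i) *s ?c i)"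
        unfolding colr by (simp add: sum.reindex[OF h[THEN conjunct1]])
      also have "\<dots> = 0" using hc h by (simp add: u_def inv_f_f[OF h[THEN conjunct1]])
      finally have "\<forall>v\<in>columns M. u v = 0"
        using vec.dependent_finite[OF fin] h by blast
      thus ?thesis using h unfolding colr u_def by (auto simp: inv_f_f[OF h[THEN conjunct1]])
    qed
    thus "inj ((*v) M)" using key by blast
  qed
qed

theorem mainTheorem10:
  fixes lam :: real
    and A :: "rat^'n::finite^'m::finite"
    and As :: "nat \<Rightarrow> rat^'n^'m"
    and bs :: "nat \<Rightarrow> rat^'m"
    and js :: "nat \<Rightarrow> 'n"
    and N :: "rat^'n^'m"
  assumes lam: "lam \<ge> 1"
    and full_rank: "rank A = CARD('n)"
    and init: "As 0 = A"
    and b_indep: "\<And>k. k \<in> {1..CARD('n)} \<Longrightarrow>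
        bs k \<in> colspace A - vec.span (bs ` {1..<k})"
    and b_approx: "\<And>k. k \<in> {1..CARD('n)} \<Longrightarrow>
        real (vnnz (bs k)) \<le> lam * real (SIV_opt A (bs ` {1..<k}))"
    and j_notin: "\<And>k. k \<in> {1..CARD('n)} \<Longrightarrow>
        column (js k) (As (k - 1)) \<notin> bs ` {1..<k}"
    and span_pres: "\<And>k. k \<in> {1..CARD('n)} \<Longrightarrow>
        colspace (replace_col (As (k - 1)) (js k) (bs k)) = colspace (As (k - 1))"
    and step: "\<And>k. k \<in> {1..CARD('n)} \<Longrightarrow>
        As k = replace_col (As (k - 1)) (js k) (bs k)"
    and N_cols: "columns N = bs ` {1..CARD('n)}"
  shows "(\<exists>X :: rat^'n^'n. invertible X \<and> N = A ** X) \<and>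
         real (mnnz N) \<le> lam * real (Min {mnnz (A ** Y) | Y :: rat^'n^'n. invertible Y})"
proof -
  let ?n = "CARD('n)"
  have injA: "inj ((*v) A)" by (rule rank_full_inj[OF full_rank])
  have indep: "k \<le> ?n + 1 \<Longrightarrow> vec.independent (bs ` {1..<k}) \<and> inj_on bs {1..<k}" for k
  proof (induction k)
    case 0 thus ?case by (simp add: vec.independent_empty)
  next
    case (Suc k)
    show ?case
    proof (cases "k = 0")
      case True thus ?thesis by (simp add: vec.independent_empty)
    next
      case False
      hence ins: "{1..<Suc k} = insert k {1..<k}" by auto
      have kin: "k \<in> {1..?n}" using Suc.prems False by auto
      have nsp: "bs k \<notin> vec.span (bs ` {1..<k})" using b_indep[OF kin] by blast
      hence nin: "bs k \<notin> bs ` {1..<k}" using vec.span_base by blast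
      from Suc.IH Suc.prems have IH: "vec.independent (bs ` {1..<k}) \<and> inj_on bs {1..<k}" by simp
      show ?thesis unfolding ins using IH nsp nin by (auto simp: vec.independent_insert)
    qed
  qed
  have "{1..<?n+1} = {1..?n}" by auto
  hence indN: "vec.independent (bs ` {1..?n})" and injb: "inj_on bs {1..?n}"
    using indep[of "?n+1"] by auto
  have cardB: "card (bs ` {1..?n}) = ?n" using card_image[OF injb] by simp
  have colrN: "columns N = range (\<lambda>j. column j N)" unfolding columns_def by auto
  have injcN: "inj (\<lambda>j. column j N)"
    using eq_card_imp_inj_on[of UNIV "\<lambda>j. column j N"] cardB N_cols colrN by simp
  have injN: "inj ((*v) N)" using inj_cols_indep[of N] injcN indN N_cols by simp
  have "\<exists>x. column j N = A *v x" for j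
  proof -
    have "column j N \<in> columns N" using colrN by auto
    hence "column j N \<in> colspace A" using N_cols b_indep by auto
    thus ?thesis using colspace_range by auto
  qed
  then obtain xf where xf: "\<And>j. column j N = A *v xf j" by metis
  define X :: "rat^'n^'n" where "X = (\<chi> i j. xf j $ i)"
  have NAX: "N = A ** X"
  proof -
    have "N $ i $ j = (A ** X) $ i $ j" for i j
    proof -
      have "N $ i $ j = column j N $ i" by (simp add: column_def)
      also have "\<dots> = (A *v xf j) $ i" by (simp add: xf)
      finally show ?thesis by (simp add: matrix_matrix_mult_def matrix_vector_mult_def X_def)
    qed
    thus ?thesis by (simp add: vec_eq_iff)
  qed
  have "inj ((*v) X)"
  proof (rule injI)
    fix y z assume "X *v y = X *v z"
    hence "A *v (X *v y) = A *v (X *v z)" by simp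
    hence "N *v y = N *v z" by (simp add: matrix_vector_mul_assoc NAX)
    thus "y = z" using injN by (meson injD)
  qed
  hence invX: "invertible X"
    using invertible_left_inverse matrix_left_invertible_injective by blast
  let ?S = "{mnnz (A ** Y) | Y :: rat^'n^'n. invertible Y}"
  have "mnnz (A ** Y) \<le> card (UNIV :: ('m \<times> 'n) set)" for Y :: "rat^'n^'n"
    unfolding mnnz_def by (rule card_mono) auto
  hence "?S \<subseteq> {..card (UNIV :: ('m \<times> 'n) set)}" by auto
  hence finS: "finite ?S" using finite_subset by blast
  have "invertible (mat 1 :: rat^'n^'n)"
    using invertible_left_inverse matrix_mul_lid by blast
  hence neS: "?S \<noteq> {}" by blast
  have "Min ?S \<in> ?S" by (rule Min_in[OF finS neS])
  then obtain Y :: "rat^'n^'n" where Y: "invertible Y" "Min ?S = mnnz (A ** Y)" by blast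
  define M where "M = A ** Y"
  have injY: "inj ((*v) Y)"
    using Y(1) invertible_left_inverse matrix_left_invertible_injective by blast
  have injM: "inj ((*v) M)"
  proof (rule injI)
    fix y z assume "M *v y = M *v z"
    hence "A *v (Y *v y) = A *v (Y *v z)" by (simp add: matrix_vector_mul_assoc M_def)
    thus "y = z" using injA injY by (meson injD)
  qed
  hence injcM: "inj (\<lambda>j. column j M)" and indM: "vec.independent (columns M)"
    using inj_cols_indep by blast+
  have colM_in: "column j M \<in> colspace A" for j
  proof -
    have "column j M = A *v (Y *v axis j 1)"
      by (simp add: matrix_vector_mul_assoc M_def flip: col_axis)
    thus ?thesis using colspace_range by auto
  qed
  define f where "f j = vnnz (column j M)" for j
  obtain xs where xs: "set xs = (UNIV::'n set)" "distinct xs"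
    using finite_distinct_list[of "UNIV::'n set"] by auto
  define ys where "ys = sort_key f xs"
  have ys1: "set ys = UNIV" "distinct ys" "sorted (map f ys)"
    using xs by (simp_all add: ys_def)
  have ys2: "length ys = ?n" using distinct_card[OF ys1(2)] ys1(1) by simp
  have bound: "SIV_opt A (bs ` {1..<k}) \<le> f (ys ! (k - 1))" if k: "k \<in> {1..?n}" for k
  proof -
    let ?T = "bs ` {1..<k}"
    let ?Sk = "(\<lambda>i. column (ys ! i) M) ` {..<k}"
    have "inj_on (\<lambda>i. column (ys ! i) M) {..<k}"
    proof (rule inj_onI)
      fix a b assume ab: "a \<in> {..<k}" "b \<in> {..<k}" "column (ys ! a) M = column (ys ! b) M"
      hence "ys ! a = ys ! b" using injcM by (meson injD)
      thus "a = b" using ab k ys1(2) ys2 nth_eq_iff_index_eq by fastforce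
    qed
    hence cardSk: "card ?Sk = k" by (simp add: card_image)
    have "?Sk \<subseteq> columns M" unfolding columns_def by auto
    hence indSk: "vec.independent ?Sk" using vec.independent_mono[OF indM] by blast
    have cardT: "card ?T \<le> k - 1" using card_image_le[of "{1..<k}" bs] by simp
    have "\<not> ?Sk \<subseteq> vec.span ?T"
    proof
      assume "?Sk \<subseteq> vec.span ?T"
      then have "card ?Sk \<le> card ?T" using vec.independent_span_bound[OF _ indSk] by blast
      with cardSk cardT k show False by auto
    qed
    then obtain i where i: "i < k" "column (ys ! i) M \<notin> vec.span ?T" by auto
    have "{vnnz a | a. a \<in> colspace A - vec.span ?T} \<subseteq> {..CARD('m)}"
      unfolding vnnz_def by (auto intro!: card_mono)
    hence finV: "finite {vnnz a | a. a \<in> colspace A - vec.span ?T}" using finite_subset by blast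
    have "SIV_opt A ?T \<le> vnnz (column (ys ! i) M)" unfolding SIV_opt_def
      by (rule Min_le[OF finV]) (use i colM_in in blast)
    also have "\<dots> = map f ys ! i" using i k ys2 by (simp add: f_def)
    also have "\<dots> \<le> map f ys ! (k - 1)"
      by (rule sorted_nth_mono[OF ys1(3)]) (use i k ys2 in auto)
    also have "\<dots> = f (ys ! (k - 1))" using k ys2 by (intro nth_map) auto
    finally show ?thesis .
  qed
  have sumN: "mnnz N = (\<Sum>k\<in>{1..?n}. vnnz (bs k))"
  proof -
    have "mnnz N = (\<Sum>j\<in>UNIV. vnnz (column j N))" by (rule mnnz_cols)
    also have "\<dots> = sum vnnz (range (\<lambda>j. column j N))" by (simp add: sum.reindex[OF injcN])
    also have "\<dots> = sum vnnz (bs ` {1..?n})" using N_cols colrN by simp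
    also have "\<dots> = (\<Sum>k\<in>{1..?n}. vnnz (bs k))" using sum.reindex[OF injb, of vnnz] by (simp add: comp_def)
    finally show ?thesis .
  qed
  have sumM: "mnnz M = (\<Sum>k\<in>{1..?n}. f (ys ! (k - 1)))"
  proof -
    have "mnnz M = sum f UNIV" unfolding f_def by (rule mnnz_cols)
    also have "\<dots> = sum f ((!) ys ` {..<?n})" proof -
      have "(!) ys ` {..<?n} = set ys" using ys2 by (auto simp: set_conv_nth)
      thus ?thesis using ys1(1) by simp
    qed
    also have "\<dots> = (\<Sum>i<?n. f (ys ! i))"
      by (simp add: sum.reindex inj_on_nth[OF ys1(2)] ys2)
    also have "\<dots> = (\<Sum>k\<in>Suc ` {..<?n}. f (ys ! (k - 1)))" by (simp add: sum.reindex)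
    also have "Suc ` {..<?n} = {1..?n}" by (rule image_Suc_lessThan)
    finally show ?thesis .
  qed
  have "real (mnnz N) = (\<Sum>k\<in>{1..?n}. real (vnnz (bs k)))" by (simp add: sumN)
  also have "\<dots> \<le> (\<Sum>k\<in>{1..?n}. lam * real (SIV_opt A (bs ` {1..<k})))"
    by (rule sum_mono) (rule b_approx)
  also have "\<dots> \<le> (\<Sum>k\<in>{1..?n}. lam * real (f (ys ! (k - 1))))"
    by (rule sum_mono) (use bound lam in \<open>auto intro: mult_left_mono\<close>)
  also have "\<dots> = lam * real (mnnz M)" by (simp add: sumM sum_distrib_left)
  finally have "real (mnnz N) \<le> lam * real (Min ?S)" using Y(2) M_def by simp
  thus ?thesis using NAX invX by blast
qed

end
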